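(* Let $T=(V,E)$ be a tree, $w:V\to\mathbb R_{\ge 0}$, and $C$ a total coloring of $V$. For every color $d\in C(V)$ let $$p^*_d=\min\{\mathrm{penalty}_{C,d}(V(T')) : T' \text{ a nonempty connected subtree of } T\}.$$ Then for every convex (total) recoloring $C'$ of $C$, $$\sum_{d\in C(V)} p^*_d\le 2\,\mathrm{cost}_C(C').$$ In particular $\sum_{d\in C(V)}p^*_d\le 2\,\mathrm{OPT}(T,C,w)$.
   Context: For a color $d$ and $U\subseteq V$, $\mathrm{penalty}_{C,d}(U)=w\big(U\setminus C^{-1}(d)\big)+w\big((V\setminus U)\cap C^{-1}(d)\big)$, where $w(X)=\sum_{v\in X}w(v)$. A coloring is convex if each color class induces a connected subtree (or is empty). $\mathrm{cost}_C(C')=w(\{v: C'(v)\neq C(v)\})$, and $\mathrm{OPT}(T,C,w)$ is the minimum of $\mathrm{cost}_C(C')$ over all convex colorings $C'$ of $T$. *)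

theory Defs
  imports Complex_Main
begin

definition graph :: "'a set \<Rightarrow> 'a set set \<Rightarrow> bool" where
  "graph V E \<longleftrightarrow> finite V \<and> (\<forall>e\<in>E. e \<subseteq> V \<and> card e = 2)"

definition adj_in :: "'a set set \<Rightarrow> 'a set \<Rightarrow> ('a \<times> 'a) set" where
  "adj_in E U = {(a, b). {a, b} \<in> E \<and> a \<in> U \<and> b \<in> U}"

definition connected_in :: "'a set set \<Rightarrow> 'a set \<Rightarrow> bool" where
  "connected_in E U \<longleftrightarrow> U \<noteq> {} \<and> (\<forall>x\<in>U. \<forall>y\<in>U. (x, y) \<in> (adj_in E U)\<^sup>*)"

definition is_cycle :: "'a set set \<Rightarrow> 'a list \<Rightarrow> bool" where
  "is_cycle E vs \<longleftrightarrow> length vs \<ge> 3 \<and> distinct vs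
     \<and> (\<forall>i < length vs - 1. {vs ! i, vs ! Suc i} \<in> E) \<and> {last vs, hd vs} \<in> E"

definition tree :: "'a set \<Rightarrow> 'a set set \<Rightarrow> bool" where
  "tree V E \<longleftrightarrow> graph V E \<and> connected_in E V \<and> (\<nexists>vs. is_cycle E vs)"

definition wt :: "('a \<Rightarrow> real) \<Rightarrow> 'a set \<Rightarrow> real" where
  "wt w X = (\<Sum>v\<in>X. w v)"

definition penalty :: "'a set \<Rightarrow> ('a \<Rightarrow> real) \<Rightarrow> ('a \<Rightarrow> 'c) \<Rightarrow> 'c \<Rightarrow> 'a set \<Rightarrow> real" where
  "penalty V w C d U = wt w {v \<in> U. C v \<noteq> d} + wt w {v \<in> V - U. C v = d}"

definition convex_coloring :: "'a set \<Rightarrow> 'a set set \<Rightarrow> ('a \<Rightarrow> 'c) \<Rightarrow> bool" where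
  "convex_coloring V E C' \<longleftrightarrow>
     (\<forall>d. {v \<in> V. C' v = d} = {} \<or> connected_in E {v \<in> V. C' v = d})"

definition cost :: "'a set \<Rightarrow> ('a \<Rightarrow> real) \<Rightarrow> ('a \<Rightarrow> 'c) \<Rightarrow> ('a \<Rightarrow> 'c) \<Rightarrow> real" where
  "cost V w C C' = wt w {v \<in> V. C' v \<noteq> C v}"

definition OPT :: "'a set \<Rightarrow> 'a set set \<Rightarrow> ('a \<Rightarrow> 'c) \<Rightarrow> ('a \<Rightarrow> real) \<Rightarrow> real" where
  "OPT V E C w = Inf {cost V w C C' | C'. convex_coloring V E C'}"

definition pstar :: "'a set \<Rightarrow> 'a set set \<Rightarrow> ('a \<Rightarrow> real) \<Rightarrow> ('a \<Rightarrow> 'c) \<Rightarrow> 'c \<Rightarrow> real" where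
  "pstar V E w C d = Min {penalty V w C d U | U. U \<subseteq> V \<and> connected_in E U}"

end

theory Submission
  imports Defs
begin

lemma wt_filter: "finite V \<Longrightarrow> wt w {v\<in>V. P v} = (\<Sum>v\<in>V. if P v then w v else 0)"
  unfolding wt_def by (simp add: sum.inter_filter)

lemma inner_A: "finite D \<Longrightarrow>
  (\<Sum>d\<in>D. if C' v = d \<and> C v \<noteq> d then (w v::real) else 0) = (if C' v \<in> D \<and> C v \<noteq> C' v then w v else 0)"
proof -
  assume f: "finite D"
  have "(\<Sum>d\<in>D. if C' v = d \<and> C v \<noteq> d then (w v::real) else 0)
      = (\<Sum>d\<in>D. if d = C' v then (if C v \<noteq> C' v then w v else 0) else 0)"
    by (rule sum.cong) auto
  also have "\<dots> = (if C' v \<in> D \<and> C v \<noteq> C' v then w v else 0)"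
    using f by (simp add: sum.delta')
  finally show ?thesis .
qed

lemma inner_B: "finite D \<Longrightarrow>
  (\<Sum>d\<in>D. if C v = d \<and> C' v \<noteq> d then (w v::real) else 0) = (if C v \<in> D \<and> C v \<noteq> C' v then w v else 0)"
proof -
  assume f: "finite D"
  have "(\<Sum>d\<in>D. if C v = d \<and> C' v \<noteq> d then (w v::real) else 0)
      = (\<Sum>d\<in>D. if d = C v then (if C v \<noteq> C' v then w v else 0) else 0)"
    by (rule sum.cong) auto
  also have "\<dots> = (if C v \<in> D \<and> C v \<noteq> C' v then w v else 0)"
    using f by (simp add: sum.delta')
  finally show ?thesis .
qed

lemma wt_mono: "finite B \<Longrightarrow> A \<subseteq> B \<Longrightarrow> \<forall>v\<in>B. w v \<ge> 0 \<Longrightarrow> wt w A \<le> wt w B"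
  unfolding wt_def by (rule sum_mono2) auto

lemma main_bound:
  fixes V :: "'a set" and E :: "'a set set" and w :: "'a \<Rightarrow> real" and C :: "'a \<Rightarrow> 'c"
  assumes fin: "finite V" and nn: "\<forall>v\<in>V. w v \<ge> 0" and cv: "convex_coloring V E C'"
  shows "(\<Sum>d\<in>C ` V. pstar V E w C d) \<le> 2 * cost V w C C'"
proof -
  define A where "A d = {v\<in>V. C' v = d \<and> C v \<noteq> d}" for d
  define B where "B d = {v\<in>V. C v = d \<and> C' v \<noteq> d}" for d
  have pd: "pstar V E w C d \<le> wt w (A d) + wt w (B d)" if d: "d \<in> C ` V" for d
  proof -
    have finS: "finite {penalty V w C d U | U. U \<subseteq> V \<and> connected_in E U}"
    proof -
      have "{penalty V w C d U | U. U \<subseteq> V \<and> connected_in E U} \<subseteq> (penalty V w C d) ` Pow V"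
        by auto
      thus ?thesis using fin by (meson finite_Pow_iff finite_imageI finite_subset)
    qed
    show ?thesis
    proof (cases "{v \<in> V. C' v = d} = {}")
      case False
      with cv have c: "connected_in E {v \<in> V. C' v = d}" unfolding convex_coloring_def by blast
      have "penalty V w C d {v \<in> V. C' v = d} = wt w (A d) + wt w (B d)"
        unfolding penalty_def A_def B_def
        by (intro arg_cong2[where f="(+)"] arg_cong[where f="wt w"]) auto
      moreover have "pstar V E w C d \<le> penalty V w C d {v \<in> V. C' v = d}"
        unfolding pstar_def using c by (intro Min_le[OF finS]) blast
      ultimately show ?thesis by simp
    next
      case True
      from d obtain v0 where v0: "v0 \<in> V" "C v0 = d" by auto
      have c: "connected_in E {v0}" unfolding connected_in_def by auto
      have "pstar V E w C d \<le> penalty V w C d {v0}"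
        unfolding pstar_def using c v0 by (intro Min_le[OF finS]) blast
      also have "penalty V w C d {v0} = wt w {} + wt w {v \<in> V - {v0}. C v = d}"
        unfolding penalty_def using v0 by (intro arg_cong2[where f="(+)"] arg_cong[where f="wt w"]) auto
      also have "\<dots> \<le> wt w (B d)"
        using True fin nn unfolding B_def wt_def by (simp, intro sum_mono2) auto
      also have "wt w (B d) \<le> wt w (A d) + wt w (B d)"
        using nn unfolding A_def wt_def by (auto intro!: sum_nonneg)
      finally show ?thesis .
    qed
  qed
  have finD: "finite (C ` V)" using fin by simp
  have sA: "(\<Sum>d\<in>C ` V. wt w (A d)) \<le> cost V w C C'"
  proof -
    have "(\<Sum>d\<in>C ` V. wt w (A d)) = (\<Sum>d\<in>C ` V. \<Sum>v\<in>V. if C' v = d \<and> C v \<noteq> d then w v else 0)"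
      unfolding A_def using fin by (simp add: wt_filter)
    also have "\<dots> = (\<Sum>v\<in>V. \<Sum>d\<in>C ` V. if C' v = d \<and> C v \<noteq> d then w v else 0)"
      by (rule sum.swap)
    also have "\<dots> = (\<Sum>v\<in>V. if C' v \<in> C ` V \<and> C v \<noteq> C' v then w v else 0)"
      using finD by (simp add: inner_A)
    also have "\<dots> \<le> (\<Sum>v\<in>V. if C' v \<noteq> C v then w v else 0)"
      using nn by (intro sum_mono) auto
    also have "\<dots> = cost V w C C'" unfolding cost_def using fin by (simp add: wt_filter)
    finally show ?thesis .
  qed
  have sB: "(\<Sum>d\<in>C ` V. wt w (B d)) \<le> cost V w C C'"
  proof -
    have "(\<Sum>d\<in>C ` V. wt w (B d)) = (\<Sum>d\<in>C ` V. \<Sum>v\<in>V. if C v = d \<and> C' v \<noteq> d then w v else 0)"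
      unfolding B_def using fin by (simp add: wt_filter)
    also have "\<dots> = (\<Sum>v\<in>V. \<Sum>d\<in>C ` V. if C v = d \<and> C' v \<noteq> d then w v else 0)"
      by (rule sum.swap)
    also have "\<dots> = (\<Sum>v\<in>V. if C v \<in> C ` V \<and> C v \<noteq> C' v then w v else 0)"
      using finD by (simp add: inner_B)
    also have "\<dots> \<le> (\<Sum>v\<in>V. if C' v \<noteq> C v then w v else 0)"
      using nn by (intro sum_mono) auto
    also have "\<dots> = cost V w C C'" unfolding cost_def using fin by (simp add: wt_filter)
    finally show ?thesis .
  qed
  have "(\<Sum>d\<in>C ` V. pstar V E w C d) \<le> (\<Sum>d\<in>C ` V. wt w (A d) + wt w (B d))"
    using pd by (intro sum_mono) auto
  also have "\<dots> = (\<Sum>d\<in>C ` V. wt w (A d)) + (\<Sum>d\<in>C ` V. wt w (B d))"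
    by (simp add: sum.distrib)
  finally show ?thesis using sA sB by linarith
qed

theorem mainTheorem3:
  fixes V :: "'a set" and E :: "'a set set" and w :: "'a \<Rightarrow> real" and C :: "'a \<Rightarrow> 'c"
  assumes "tree V E"
    and "\<forall>v\<in>V. w v \<ge> 0"
  shows "(\<forall>C' :: 'a \<Rightarrow> 'c. convex_coloring V E C' \<longrightarrow>
            (\<Sum>d\<in>C ` V. pstar V E w C d) \<le> 2 * cost V w C C')
         \<and> (\<Sum>d\<in>C ` V. pstar V E w C d) \<le> 2 * OPT V E C w"
proof -
  have fin: "finite V" and cV: "connected_in E V"
    using assms(1) unfolding tree_def graph_def by auto
  have P1: "\<forall>C' :: 'a \<Rightarrow> 'c. convex_coloring V E C' \<longrightarrow>
            (\<Sum>d\<in>C ` V. pstar V E w C d) \<le> 2 * cost V w C C'"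
    using main_bound[OF fin assms(2)] by blast
  obtain c :: 'c where True by blast
  have "convex_coloring V E (\<lambda>_. c)"
    unfolding convex_coloring_def using cV by auto
  hence ne: "{cost V w C C' | C'. convex_coloring V E C'} \<noteq> {}" by blast
  have "(\<Sum>d\<in>C ` V. pstar V E w C d) / 2 \<le> Inf {cost V w C C' | C'. convex_coloring V E C'}"
    by (rule cInf_greatest[OF ne]) (use P1 in fastforce)
  hence "(\<Sum>d\<in>C ` V. pstar V E w C d) \<le> 2 * OPT V E C w"
    unfolding OPT_def by linarith
  with P1 show ?thesis by blast
qed

end
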